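(* Let $n=5$, let $x_1<x_2<\cdots<x_5$ be fixed real numbers and $Y_i=\beta_0+\beta_1x_i+\varepsilon_i$ ($i=1,\dots,5$) with unknown $\beta_0,\beta_1\in\mathbb{R}$ and $\varepsilon_1,\dots,\varepsilon_5$ i.i.d. with a continuous distribution. Let $s_1<s_2<\cdots<s_{10}$ be the ten slopes $S_{ij}=(Y_i-Y_j)/(x_i-x_j)$, $i<j$, sorted increasingly, and let $w_1<w_2<\cdots<w_{55}$ be the $55$ Walsh averages $(s_i+s_j)/2$, $1\le i\le j\le 10$, sorted increasingly. Define $p_1=P(\beta_1\in(s_2,s_9)\wedge 2s_2\le s_1+s_9\wedge s_2+s_{10}\le 2s_9)$, $p_2=P(\beta_1\in(s_2,s_{10})\wedge 2s_2\le s_1+s_9\wedge 2s_9<s_2+s_{10})$, $p_3=P(\beta_1\in(s_1,s_9)\wedge s_1+s_9<2s_2\wedge s_2+s_{10}\le 2s_9)$, $p_4=P(\beta_1\in(s_1,s_{10})\wedge s_1+s_9<2s_2\wedge 2s_9<s_2+s_{10})$. Then $P(\beta_1\in(w_9,w_{47}))\le p_1+p_2+p_3+p_4$.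
   Context: Ties among the slopes and among the Walsh averages occur with probability zero and are ignored. *)

theory Defs
  imports "HOL-Probability.Probability"
begin

definition sorted_slopes :: "(nat \<Rightarrow> real) \<Rightarrow> (nat \<Rightarrow> real) \<Rightarrow> real list" where
  "sorted_slopes x Y = sort [(Y i - Y j) / (x i - x j). i \<leftarrow> [1..<6], j \<leftarrow> [1..<6], i < j]"

definition ord_slope :: "(nat \<Rightarrow> real) \<Rightarrow> (nat \<Rightarrow> real) \<Rightarrow> nat \<Rightarrow> real" where
  "ord_slope x Y k = sorted_slopes x Y ! (k - 1)"

definition sorted_walsh :: "(nat \<Rightarrow> real) \<Rightarrow> (nat \<Rightarrow> real) \<Rightarrow> real list" where
  "sorted_walsh x Y = sort [(ord_slope x Y i + ord_slope x Y j) / 2.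
                             i \<leftarrow> [1..<11], j \<leftarrow> [1..<11], i \<le> j]"

definition ord_walsh :: "(nat \<Rightarrow> real) \<Rightarrow> (nat \<Rightarrow> real) \<Rightarrow> nat \<Rightarrow> real" where
  "ord_walsh x Y k = sorted_walsh x Y ! (k - 1)"

end

theory Submission
  imports Defs
begin



lemma sorted_nth_le_iff:
  fixes ys :: "real list"
  assumes "sorted ys" "k < length ys"
  shows "ys!k \<le> t \<longleftrightarrow> k < length (filter (\<lambda>y. y \<le> t) ys)"
proof
  assume h: "ys!k \<le> t"
  have "{..k} \<subseteq> {i. i < length ys \<and> ys!i \<le> t}"
    using assms h by (auto simp: sorted_iff_nth_mono intro: order_trans)
  then have "card {..k} \<le> card {i. i < length ys \<and> ys!i \<le> t}"
    by (intro card_mono) auto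
  then show "k < length (filter (\<lambda>y. y \<le> t) ys)"
    by (simp add: length_filter_conv_card)
next
  assume h: "k < length (filter (\<lambda>y. y \<le> t) ys)"
  show "ys!k \<le> t"
  proof (rule ccontr)
    assume "\<not> ys!k \<le> t"
    then have "{i. i < length ys \<and> ys!i \<le> t} \<subseteq> {..<k}"
      using assms by (auto simp: sorted_iff_nth_mono) (metis linorder_not_le order_trans)
    then have "card {i. i < length ys \<and> ys!i \<le> t} \<le> k"
      by (metis card_lessThan card_mono finite_lessThan)
    with h show False by (simp add: length_filter_conv_card)
  qed
qed

lemma sorted_nth_less_iff:
  fixes ys :: "real list"
  assumes "sorted ys" "k < length ys"
  shows "ys!k < t \<longleftrightarrow> k < length (filter (\<lambda>y. y < t) ys)"
proof
  assume h: "ys!k < t"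
  have "{..k} \<subseteq> {i. i < length ys \<and> ys!i < t}"
    using assms h by (auto simp: sorted_iff_nth_mono intro: le_less_trans)
  then have "card {..k} \<le> card {i. i < length ys \<and> ys!i < t}"
    by (intro card_mono) auto
  then show "k < length (filter (\<lambda>y. y < t) ys)"
    by (simp add: length_filter_conv_card)
next
  assume h: "k < length (filter (\<lambda>y. y < t) ys)"
  show "ys!k < t"
  proof (rule ccontr)
    assume "\<not> ys!k < t"
    then have "{i. i < length ys \<and> ys!i < t} \<subseteq> {..<k}"
      using assms by (auto simp: sorted_iff_nth_mono) (metis linorder_not_le order.strict_trans2)
    then have "card {i. i < length ys \<and> ys!i < t} \<le> k"
      by (metis card_lessThan card_mono finite_lessThan)
    with h show False by (simp add: length_filter_conv_card)
  qed
qed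

lemma length_filter_sort: "length (filter P (sort xs)) = length (filter P xs)"
  by (simp add: filter_sort)

lemma length_filter_mono_pred:
  assumes "\<And>x. x \<in> set xs \<Longrightarrow> P x \<Longrightarrow> Q x"
  shows "length (filter P xs) \<le> length (filter Q xs)"
  using assms by (induction xs) auto

lemma measurable_sort_nth:
  fixes fs :: "('a \<Rightarrow> real) list"
  assumes "\<And>f. f \<in> set fs \<Longrightarrow> f \<in> borel_measurable M" "k < length fs"
  shows "(\<lambda>\<omega>. sort (map (\<lambda>f. f \<omega>) fs) ! k) \<in> borel_measurable M"
  unfolding borel_measurable_iff_le
proof
  fix t
  have eq: "{\<omega> \<in> space M. sort (map (\<lambda>f. f \<omega>) fs) ! k \<le> t}
      = {\<omega> \<in> space M. real k < (\<Sum>i<length fs. if (fs!i) \<omega> \<le> t then 1 else 0)}"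
  proof -
    have "sort (map (\<lambda>f. f \<omega>) fs) ! k \<le> t \<longleftrightarrow> real k < (\<Sum>i<length fs. if (fs!i) \<omega> \<le> t then 1 else 0)" for \<omega>
    proof -
      have "sort (map (\<lambda>f. f \<omega>) fs) ! k \<le> t \<longleftrightarrow> k < length (filter (\<lambda>y. y \<le> t) (map (\<lambda>f. f \<omega>) fs))"
        using sorted_nth_le_iff[of "sort (map (\<lambda>f. f \<omega>) fs)" k t] assms(2)
        by (simp add: length_filter_sort)
      also have "length (filter (\<lambda>y. y \<le> t) (map (\<lambda>f. f \<omega>) fs)) = card {i. i < length fs \<and> (fs!i) \<omega> \<le> t}"
        by (simp add: length_filter_conv_card) (metis (lifting) nth_map)
      finally have e1: "sort (map (\<lambda>f. f \<omega>) fs) ! k \<le> t \<longleftrightarrow> k < card {i. i < length fs \<and> (fs!i) \<omega> \<le> t}" .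
      have e2: "real (card {i. i < length fs \<and> (fs!i) \<omega> \<le> t}) = (\<Sum>i<length fs. if (fs!i) \<omega> \<le> t then 1 else 0)"
        by (simp add: sum.If_cases Collect_conj_eq lessThan_def Int_commute)
      show ?thesis
        by (subst e2[symmetric]) (simp only: e1 of_nat_less_iff)
    qed
    then show ?thesis by auto
  qed
  have "(\<lambda>\<omega>. (\<Sum>i<length fs. if (fs!i) \<omega> \<le> t then 1 else 0::real)) \<in> borel_measurable M"
    using assms(1) by (intro borel_measurable_sum) (auto intro!: measurable_If)
  then show "{\<omega> \<in> space M. sort (map (\<lambda>f. f \<omega>) fs) ! k \<le> t} \<in> sets M"
    unfolding eq by measurable
qed


theorem theorem4:
  fixes M :: "'a measure" and x :: "nat \<Rightarrow> real" and \<epsilon> :: "nat \<Rightarrow> 'a \<Rightarrow> real"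
    and \<beta>0 \<beta>1 :: real
  assumes "prob_space M"
    and x_incr: "\<And>i j. 1 \<le> i \<Longrightarrow> i < j \<Longrightarrow> j \<le> 5 \<Longrightarrow> x i < x j"
    and rv: "\<And>i. i \<in> {1..5} \<Longrightarrow> \<epsilon> i \<in> borel_measurable M"
    and indep: "prob_space.indep_vars M (\<lambda>_. borel) \<epsilon> {1..5}"
    and ident: "\<And>i. i \<in> {1..5} \<Longrightarrow> distr M borel (\<epsilon> i) = distr M borel (\<epsilon> 1)"
    and cont: "\<And>i c. i \<in> {1..5} \<Longrightarrow> measure M {\<omega> \<in> space M. \<epsilon> i \<omega> = c} = 0"
  defines "Y \<equiv> \<lambda>\<omega> i. \<beta>0 + \<beta>1 * x i + \<epsilon> i \<omega>"
  defines "s \<equiv> \<lambda>\<omega> k. ord_slope x (Y \<omega>) k"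
  defines "w \<equiv> \<lambda>\<omega> k. ord_walsh x (Y \<omega>) k"
  shows "measure M {\<omega> \<in> space M. w \<omega> 9 < \<beta>1 \<and> \<beta>1 < w \<omega> 47} \<le>
      measure M {\<omega> \<in> space M. s \<omega> 2 < \<beta>1 \<and> \<beta>1 < s \<omega> 9
          \<and> 2 * s \<omega> 2 \<le> s \<omega> 1 + s \<omega> 9 \<and> s \<omega> 2 + s \<omega> 10 \<le> 2 * s \<omega> 9}
    + measure M {\<omega> \<in> space M. s \<omega> 2 < \<beta>1 \<and> \<beta>1 < s \<omega> 10
          \<and> 2 * s \<omega> 2 \<le> s \<omega> 1 + s \<omega> 9 \<and> 2 * s \<omega> 9 < s \<omega> 2 + s \<omega> 10}
    + measure M {\<omega> \<in> space M. s \<omega> 1 < \<beta>1 \<and> \<beta>1 < s \<omega> 9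
          \<and> s \<omega> 1 + s \<omega> 9 < 2 * s \<omega> 2 \<and> s \<omega> 2 + s \<omega> 10 \<le> 2 * s \<omega> 9}
    + measure M {\<omega> \<in> space M. s \<omega> 1 < \<beta>1 \<and> \<beta>1 < s \<omega> 10
          \<and> s \<omega> 1 + s \<omega> 9 < 2 * s \<omega> 2 \<and> 2 * s \<omega> 9 < s \<omega> 2 + s \<omega> 10}"
  
proof -
  interpret prob_space M by fact
  define PS where "PS = [(i,j). i \<leftarrow> [1..<6::nat], j \<leftarrow> [1..<6], i < j]"
  define PL where "PL = [(i,j). i \<leftarrow> [1..<11::nat], j \<leftarrow> [1..<11], i \<le> j]"
  define SL where "SL = map (\<lambda>(i,j) \<omega>. (Y \<omega> i - Y \<omega> j) / (x i - x j)) PS"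
  define WL where "WL = map (\<lambda>(i,j) \<omega>. (s \<omega> i + s \<omega> j) / 2) PL"
  have lenPS: "length PS = 10" unfolding PS_def by (simp add: upt_rec)
  have lenPL: "length PL = 55" unfolding PL_def by (simp add: upt_rec)
  have sl_eq: "sorted_slopes x (Y \<omega>) = sort (map (\<lambda>f. f \<omega>) SL)" for \<omega>
    unfolding sorted_slopes_def SL_def PS_def
    by (simp add: map_concat comp_def if_distrib cong: if_cong)
  have wl_eq: "sorted_walsh x (Y \<omega>) = sort (map (\<lambda>(i,j). (s \<omega> i + s \<omega> j) / 2) PL)" for \<omega>
    unfolding sorted_walsh_def PL_def s_def
    by (simp add: map_concat comp_def if_distrib cong: if_cong)
  have wl_eq': "sorted_walsh x (Y \<omega>) = sort (map (\<lambda>f. f \<omega>) WL)" for \<omega>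
    unfolding wl_eq WL_def by (simp add: comp_def case_prod_unfold)
  have s_eq: "s \<omega> k = sort (map (\<lambda>f. f \<omega>) SL) ! (k - 1)" for \<omega> k
    unfolding s_def ord_slope_def sl_eq by simp
  have w_eq: "w \<omega> k = sort (map (\<lambda>f. f \<omega>) WL) ! (k - 1)" for \<omega> k
    unfolding w_def ord_walsh_def wl_eq' by simp
  have Ymeas: "(\<lambda>\<omega>. Y \<omega> i) \<in> borel_measurable M" if "i \<in> {1..5}" for i
    unfolding Y_def using rv[OF that] by measurable
  have SLmeas: "f \<in> borel_measurable M" if "f \<in> set SL" for f
  proof -
    from that obtain i j where ij: "(i,j) \<in> set PS" "f = (\<lambda>\<omega>. (Y \<omega> i - Y \<omega> j) / (x i - x j))"
      unfolding SL_def by auto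
    then have "i \<in> {1..5}" "j \<in> {1..5}" unfolding PS_def by auto
    then show ?thesis using ij(2) Ymeas by (simp add: borel_measurable_divide borel_measurable_diff)
  qed
  have smeas: "(\<lambda>\<omega>. s \<omega> k) \<in> borel_measurable M" if "k \<in> {1..10}" for k
    unfolding s_eq using that lenPS by (intro measurable_sort_nth SLmeas) (auto simp: SL_def)
  have WLmeas: "f \<in> borel_measurable M" if "f \<in> set WL" for f
  proof -
    from that obtain i j where ij: "(i,j) \<in> set PL" "f = (\<lambda>\<omega>. (s \<omega> i + s \<omega> j) / 2)"
      unfolding WL_def by auto
    then have "i \<in> {1..10}" "j \<in> {1..10}" unfolding PL_def by auto
    then show ?thesis using ij(2) smeas by (simp add: borel_measurable_divide borel_measurable_add)
  qed
  have wmeas: "(\<lambda>\<omega>. w \<omega> k) \<in> borel_measurable M" if "k \<in> {1..55}" for k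
    unfolding w_eq using that lenPL by (intro measurable_sort_nth WLmeas) (auto simp: WL_def)
  have [measurable]: "(\<lambda>\<omega>. s \<omega> 1) \<in> borel_measurable M" "(\<lambda>\<omega>. s \<omega> 2) \<in> borel_measurable M"
    "(\<lambda>\<omega>. s \<omega> 9) \<in> borel_measurable M" "(\<lambda>\<omega>. s \<omega> 10) \<in> borel_measurable M"
    "(\<lambda>\<omega>. w \<omega> 9) \<in> borel_measurable M" "(\<lambda>\<omega>. w \<omega> 47) \<in> borel_measurable M"
    by (auto intro: smeas wmeas)
  have mono: "s \<omega> i \<le> s \<omega> j" if "1 \<le> i" "i \<le> j" "j \<le> 10" for \<omega> i j
  proof -
    have "sorted (sort (map (\<lambda>f. f \<omega>) SL))" by simp
    moreover have "length (sort (map (\<lambda>f. f \<omega>) SL)) = 10" using lenPS by (simp add: SL_def)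
    ultimately show ?thesis unfolding s_eq using that by (auto simp: sorted_iff_nth_mono)
  qed
  have wlen: "length (sort (map (\<lambda>(i,j). (s \<omega> i + s \<omega> j) / 2) PL)) = 55" for \<omega>
    using lenPL by simp
  have w_eq2: "w \<omega> k = sort (map (\<lambda>(i,j). (s \<omega> i + s \<omega> j) / 2) PL) ! (k - 1)" for \<omega> k
    unfolding w_def ord_walsh_def wl_eq by simp
  have PLin: "1 \<le> i \<and> i \<le> j \<and> j \<le> 10" if "(i,j) \<in> set PL" for i j
    using that unfolding PL_def by auto
  have lower: "min (s \<omega> 2) ((s \<omega> 1 + s \<omega> 9) / 2) \<le> w \<omega> 9" for \<omega>
  proof (rule ccontr)
    define m where "m = min (s \<omega> 2) ((s \<omega> 1 + s \<omega> 9) / 2)"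
    define g where "g = (\<lambda>(i,j). (s \<omega> i + s \<omega> j) / 2)"
    assume "\<not> min (s \<omega> 2) ((s \<omega> 1 + s \<omega> 9) / 2) \<le> w \<omega> 9"
    then have "w \<omega> 9 < m" unfolding m_def by linarith
    moreover have "sort (map g PL) ! 8 = w \<omega> 9" by (simp add: g_def w_eq2)
    ultimately have "sort (map g PL) ! 8 < m" by simp
    then have "8 < length (filter (\<lambda>y. y < m) (sort (map g PL)))"
      using sorted_nth_less_iff[of "sort (map g PL)" 8 m] wlen[of \<omega>] by (simp add: g_def)
    also have "\<dots> = length (filter (\<lambda>p. g p < m) PL)"
      by (simp add: length_filter_sort filter_map comp_def)
    also have "\<dots> \<le> length (filter (\<lambda>(i,j). i = 1 \<and> j \<le> 8) PL)"
    proof (rule length_filter_mono_pred)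
      fix p assume p: "p \<in> set PL" "g p < m"
      obtain i j where pij: "p = (i,j)" by fastforce
      have r: "1 \<le> i \<and> i \<le> j \<and> j \<le> 10" using PLin p(1) pij by auto
      show "(\<lambda>(i,j). i = 1 \<and> j \<le> 8) p"
      proof (rule ccontr)
        assume "\<not> (\<lambda>(i,j). i = 1 \<and> j \<le> (8::nat)) p"
        then have "2 \<le> i \<or> (i = 1 \<and> 9 \<le> j)" using r pij by auto
        then show False
        proof
          assume "2 \<le> i"
          then have "s \<omega> 2 \<le> s \<omega> i" "s \<omega> 2 \<le> s \<omega> j" using mono r by auto
          then show False using p(2) pij unfolding g_def m_def by auto
        next
          assume "i = 1 \<and> 9 \<le> j"
          then have "s \<omega> 9 \<le> s \<omega> j" using mono r by auto
          then show False using p(2) pij \<open>i = 1 \<and> 9 \<le> j\<close> unfolding g_def m_def by auto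
        qed
      qed
    qed
    also have "\<dots> = 8" unfolding PL_def by (simp add: upt_rec)
    finally show False by simp
  qed
  have upper: "w \<omega> 47 \<le> max (s \<omega> 9) ((s \<omega> 2 + s \<omega> 10) / 2)" for \<omega>
  proof -
    define m where "m = max (s \<omega> 9) ((s \<omega> 2 + s \<omega> 10) / 2)"
    define g where "g = (\<lambda>(i,j). (s \<omega> i + s \<omega> j) / 2)"
    have "(47::nat) \<le> length (filter (\<lambda>(i,j). \<not> (j = 10 \<and> 3 \<le> i)) PL)"
      unfolding PL_def by (simp add: upt_rec)
    also have "\<dots> \<le> length (filter (\<lambda>p. g p \<le> m) PL)"
    proof (rule length_filter_mono_pred)
      fix p assume p: "p \<in> set PL" "(\<lambda>(i,j). \<not> (j = 10 \<and> 3 \<le> i)) p"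
      obtain i j where pij: "p = (i,j)" by fastforce
      have r: "1 \<le> i \<and> i \<le> j \<and> j \<le> 10" using PLin p(1) pij by auto
      have "j \<le> 9 \<or> (j = 10 \<and> i \<le> 2)" using r p(2) pij by auto
      then show "g p \<le> m"
      proof
        assume "j \<le> 9"
        then have "s \<omega> i \<le> s \<omega> 9" "s \<omega> j \<le> s \<omega> 9" using mono r by auto
        have "s \<omega> 9 \<le> m" unfolding m_def by simp
        then show ?thesis using pij \<open>s \<omega> i \<le> s \<omega> 9\<close> \<open>s \<omega> j \<le> s \<omega> 9\<close> unfolding g_def by auto
      next
        assume a: "j = 10 \<and> i \<le> 2"
        then have "s \<omega> i \<le> s \<omega> 2" using mono r by auto
        have "(s \<omega> 2 + s \<omega> 10) / 2 \<le> m" unfolding m_def by simp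
        then show ?thesis using pij a \<open>s \<omega> i \<le> s \<omega> 2\<close> unfolding g_def by auto
      qed
    qed
    also have "\<dots> = length (filter (\<lambda>y. y \<le> m) (sort (map g PL)))"
      by (simp add: length_filter_sort filter_map comp_def)
    finally have "46 < length (filter (\<lambda>y. y \<le> m) (sort (map g PL)))" by simp
    then have "sort (map g PL) ! 46 \<le> m"
      using sorted_nth_le_iff[of "sort (map g PL)" 46 m] wlen[of \<omega>] by (simp add: g_def)
    moreover have "sort (map g PL) ! 46 = w \<omega> 47" by (simp add: g_def w_eq2)
    ultimately show ?thesis unfolding m_def by simp
  qed
  let ?L = "{\<omega> \<in> space M. w \<omega> 9 < \<beta>1 \<and> \<beta>1 < w \<omega> 47}"
  let ?R1 = "{\<omega> \<in> space M. s \<omega> 2 < \<beta>1 \<and> \<beta>1 < s \<omega> 9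
          \<and> 2 * s \<omega> 2 \<le> s \<omega> 1 + s \<omega> 9 \<and> s \<omega> 2 + s \<omega> 10 \<le> 2 * s \<omega> 9}"
  let ?R2 = "{\<omega> \<in> space M. s \<omega> 2 < \<beta>1 \<and> \<beta>1 < s \<omega> 10
          \<and> 2 * s \<omega> 2 \<le> s \<omega> 1 + s \<omega> 9 \<and> 2 * s \<omega> 9 < s \<omega> 2 + s \<omega> 10}"
  let ?R3 = "{\<omega> \<in> space M. s \<omega> 1 < \<beta>1 \<and> \<beta>1 < s \<omega> 9
          \<and> s \<omega> 1 + s \<omega> 9 < 2 * s \<omega> 2 \<and> s \<omega> 2 + s \<omega> 10 \<le> 2 * s \<omega> 9}"
  let ?R4 = "{\<omega> \<in> space M. s \<omega> 1 < \<beta>1 \<and> \<beta>1 < s \<omega> 10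
          \<and> s \<omega> 1 + s \<omega> 9 < 2 * s \<omega> 2 \<and> 2 * s \<omega> 9 < s \<omega> 2 + s \<omega> 10}"
  have sub: "?L \<subseteq> ?R1 \<union> ?R2 \<union> ?R3 \<union> ?R4"
  proof
    fix \<omega> assume "\<omega> \<in> ?L"
    then have om: "\<omega> \<in> space M" "w \<omega> 9 < \<beta>1" "\<beta>1 < w \<omega> 47" by auto
    have lo: "min (s \<omega> 2) ((s \<omega> 1 + s \<omega> 9) / 2) < \<beta>1" using lower[of \<omega>] om by linarith
    have hi: "\<beta>1 < max (s \<omega> 9) ((s \<omega> 2 + s \<omega> 10) / 2)" using upper[of \<omega>] om by linarith
    have "s \<omega> 1 \<le> s \<omega> 9" "s \<omega> 2 \<le> s \<omega> 10" using mono by auto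
    note h = this
    show "\<omega> \<in> ?R1 \<union> ?R2 \<union> ?R3 \<union> ?R4"
    proof (cases "2 * s \<omega> 2 \<le> s \<omega> 1 + s \<omega> 9")
      case A: True
      then have l: "s \<omega> 2 < \<beta>1" using lo by (simp add: min_def split: if_splits)
      show ?thesis
      proof (cases "s \<omega> 2 + s \<omega> 10 \<le> 2 * s \<omega> 9")
        case True
        then have "\<beta>1 < s \<omega> 9" using hi by (simp add: max_def split: if_splits)
        then show ?thesis using A True l om(1) by blast
      next
        case False
        then have "\<beta>1 < s \<omega> 10" using hi h by (simp add: max_def split: if_splits)
        then show ?thesis using A False l om(1) by simp
      qed
    next
      case A: False
      then have l: "s \<omega> 1 < \<beta>1" using lo h by (simp add: min_def split: if_splits)
      show ?thesis
      proof (cases "s \<omega> 2 + s \<omega> 10 \<le> 2 * s \<omega> 9")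
        case True
        then have "\<beta>1 < s \<omega> 9" using hi by (simp add: max_def split: if_splits)
        then show ?thesis using A True l om(1) by simp
      next
        case False
        then have "\<beta>1 < s \<omega> 10" using hi h by (simp add: max_def split: if_splits)
        then show ?thesis using A False l om(1) by simp
      qed
    qed
  qed
  have meas: "?L \<in> sets M" "?R1 \<in> sets M" "?R2 \<in> sets M" "?R3 \<in> sets M" "?R4 \<in> sets M"
    by (auto intro!: sets.sets_Collect_conj borel_measurable_less borel_measurable_le
         borel_measurable_add borel_measurable_times smeas wmeas)
  have "measure M ?L \<le> measure M (?R1 \<union> ?R2 \<union> ?R3 \<union> ?R4)"
    by (rule finite_measure_mono[OF sub]) (intro sets.Un meas)
  also have "\<dots> \<le> measure M (?R1 \<union> ?R2 \<union> ?R3) + measure M ?R4"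
    by (intro measure_Un_le sets.Un meas)
  also have "measure M (?R1 \<union> ?R2 \<union> ?R3) \<le> measure M (?R1 \<union> ?R2) + measure M ?R3"
    by (intro measure_Un_le sets.Un meas)
  also have "measure M (?R1 \<union> ?R2) \<le> measure M ?R1 + measure M ?R2"
    by (intro measure_Un_le sets.Un meas)
  finally show ?thesis by simp
qed

end
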